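(* Let $G$ be a Tanner graph representing the binary code $\mathcal{C}$, and let $G'$ be obtained from $G$ by adding redundant check nodes, i.e. new check nodes adjacent to existing variable nodes such that $G'$ represents the same code $\mathcal{C}$. Then every lift-realizable pseudocodeword of $G'$ is a lift-realizable pseudocodeword of $G$; that is, the set of lift-realizable pseudocodewords can only shrink when redundant check nodes are added.
   Context: A Tanner graph is a finite bipartite graph with variable nodes $v_1,\dots,v_n$ and check nodes; its code consists of all $x\in\{0,1\}^n$ with every check node having an even number of neighbours $v_i$ with $x_i=1$. A degree-$\ell$ lift replaces each node by $\ell$ copies and each edge by a perfect matching between copy-sets; a lift-realizable pseudocodeword $p\in\mathbb{Z}_{\ge0}^n$ is obtained from a codeword of the code of a finite lift by letting $p_i$ be the number of copies of $v_i$ assigned 1. *)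

theory Defs
  imports Main
begin

definition tanner_graph :: "'v set \<Rightarrow> 'c set \<Rightarrow> ('v \<times> 'c) set \<Rightarrow> bool" where
  "tanner_graph V C E \<longleftrightarrow> finite V \<and> finite C \<and> E \<subseteq> V \<times> C"

definition tanner_code :: "'v set \<Rightarrow> 'c set \<Rightarrow> ('v \<times> 'c) set \<Rightarrow> ('v \<Rightarrow> bool) set" where
  "tanner_code V C E = {x. (\<forall>v. v \<notin> V \<longrightarrow> \<not> x v) \<and>
      (\<forall>c\<in>C. even (card {v\<in>V. (v, c) \<in> E \<and> x v}))}"

text \<open>Degree-l lift with permutations pi: each edge (v,c) is replaced by the perfect matching
 joining copy (v,a) to copy (c, pi (v,c) a).\<close>
definition lift_edges :: "nat \<Rightarrow> ('v \<times> 'c \<Rightarrow> nat \<Rightarrow> nat) \<Rightarrow> ('v \<times> 'c) set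
      \<Rightarrow> (('v \<times> nat) \<times> ('c \<times> nat)) set" where
  "lift_edges l pi E = {((v, a), (c, pi (v, c) a)) | v c a. (v, c) \<in> E \<and> a < l}"

definition is_lift_perm :: "nat \<Rightarrow> ('v \<times> 'c) set \<Rightarrow> ('v \<times> 'c \<Rightarrow> nat \<Rightarrow> nat) \<Rightarrow> bool" where
  "is_lift_perm l E pi \<longleftrightarrow> (\<forall>e\<in>E. bij_betw (pi e) {..<l} {..<l})"

definition lift_pseudocodeword :: "'v set \<Rightarrow> 'c set \<Rightarrow> ('v \<times> 'c) set \<Rightarrow> ('v \<Rightarrow> nat) \<Rightarrow> bool" where
  "lift_pseudocodeword V C E p \<longleftrightarrow>
     (\<exists>l pi x. l \<ge> 1 \<and> is_lift_perm l E pi \<and>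
        x \<in> tanner_code (V \<times> {..<l}) (C \<times> {..<l}) (lift_edges l pi E) \<and>
        p = (\<lambda>v. if v \<in> V then card {a. a < l \<and> x (v, a)} else 0))"

end

theory Submission
  imports Defs
begin

theorem theorem11:
  fixes V :: "'v set" and C C' :: "'c set" and E E' :: "('v \<times> 'c) set" and p :: "'v \<Rightarrow> nat"
  assumes "tanner_graph V C E"
    and "tanner_graph V C' E'"
    and "C \<inter> C' = {}"
    and "tanner_code V (C \<union> C') (E \<union> E') = tanner_code V C E"
    and "lift_pseudocodeword V (C \<union> C') (E \<union> E') p"
  shows "lift_pseudocodeword V C E p"
proof -
  obtain l pi x where l: "l \<ge> 1" and pi: "is_lift_perm l (E \<union> E') pi"
    and x: "x \<in> tanner_code (V \<times> {..<l}) ((C \<union> C') \<times> {..<l}) (lift_edges l pi (E \<union> E'))"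
    and p: "p = (\<lambda>v. if v \<in> V then card {a. a < l \<and> x (v, a)} else 0)"
    using assms(5) unfolding lift_pseudocodeword_def by blast
  have pi': "is_lift_perm l E pi" using pi unfolding is_lift_perm_def by blast
  have E'C: "(v, c) \<in> E' \<Longrightarrow> c \<notin> C" for v c
    using assms(2,3) unfolding tanner_graph_def by blast
  have key: "c \<in> C \<Longrightarrow> (((v, a), (c, b)) \<in> lift_edges l pi (E \<union> E'))
      = (((v, a), (c, b)) \<in> lift_edges l pi E)" for v a c b
    unfolding lift_edges_def using E'C by blast
  have "x \<in> tanner_code (V \<times> {..<l}) (C \<times> {..<l}) (lift_edges l pi E)"
  proof -
    have z: "\<forall>w. w \<notin> V \<times> {..<l} \<longrightarrow> \<not> x w" using x unfolding tanner_code_def by blast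
    have "even (card {w \<in> V \<times> {..<l}. (w, cb) \<in> lift_edges l pi E \<and> x w})"
      if cb: "cb \<in> C \<times> {..<l}" for cb
    proof -
      obtain c b where cbe: "cb = (c, b)" and c: "c \<in> C" using cb by blast
      have "{w \<in> V \<times> {..<l}. (w, cb) \<in> lift_edges l pi E \<and> x w}
          = {w \<in> V \<times> {..<l}. (w, cb) \<in> lift_edges l pi (E \<union> E') \<and> x w}"
        using key[OF c] cbe by auto
      moreover have "cb \<in> (C \<union> C') \<times> {..<l}" using cb by blast
      ultimately show ?thesis using x unfolding tanner_code_def by auto
    qed
    with z show ?thesis unfolding tanner_code_def by blast
  qed
  then show ?thesis unfolding lift_pseudocodeword_def using l pi' p by blast
qed

end
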